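(* Let $N\ge2$ and $0<p<1$, and let $V$ be the vertex set (of size $2N$, two parts of size $N$) of the random bipartite graph $G_{N,N,p}$. Let $T\subseteq V$ with $|T|=t$, and let $X$ be the number of vertices in $V\setminus T$ of degree at most $1$. Set \[\mu=(2N-t)\big((1-p)^N+Np(1-p)^{N-1}\big),\qquad \sigma=pN\big((1-p)^{N-1}+(N-1)p(1-p)^{N-2}\big).\] Then \[\mathbb{P}(X=0)\le\exp\big\{-\mu+\mu\,\sigma\log(1+1/\sigma)\big\}.\]
   Context: $G_{N,N,p}$ is the random bipartite graph with parts of size $N$ in which each of the $N^2$ pairs with one vertex in each part is an edge independently with probability $p$. *)

theory Defs
  imports "HOL-Probability.Probability"
begin

text \<open>Vertices: Inl i (left part) and Inr j
  (right part) for i, j < N. A graph is encoded by its edge indicator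
  G :: nat \<times> nat \<Rightarrow> bool, where G (i,j) means Inl i and Inr j are adjacent.\<close>

definition bip_vertices :: "nat \<Rightarrow> (nat + nat) set" where
  "bip_vertices N = Inl ` {..<N} \<union> Inr ` {..<N}"

definition G_NNp :: "nat \<Rightarrow> real \<Rightarrow> (nat \<times> nat \<Rightarrow> bool) pmf" where
  "G_NNp N p = Pi_pmf ({..<N} \<times> {..<N}) False (\<lambda>_. bernoulli_pmf p)"

fun bip_degree :: "nat \<Rightarrow> (nat \<times> nat \<Rightarrow> bool) \<Rightarrow> nat + nat \<Rightarrow> nat" where
  "bip_degree N G (Inl i) = card {j \<in> {..<N}. G (i, j)}"
| "bip_degree N G (Inr j) = card {i \<in> {..<N}. G (i, j)}"

definition low_deg_count :: "nat \<Rightarrow> (nat + nat) set \<Rightarrow> (nat \<times> nat \<Rightarrow> bool) \<Rightarrow> nat" where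
  "low_deg_count N T G = card {v \<in> bip_vertices N - T. bip_degree N G v \<le> 1}"

end

theory Submission
  imports Defs
begin

definition Om :: "'e set \<Rightarrow> ('e \<Rightarrow> bool) set" where
  "Om I = {G. \<forall>e. e \<notin> I \<longrightarrow> \<not> G e}"

definition Wt :: "real \<Rightarrow> 'e set \<Rightarrow> ('e \<Rightarrow> bool) \<Rightarrow> real" where
  "Wt p I G = (\<Prod>e\<in>I. if G e then p else 1 - p)"

definition mu :: "real \<Rightarrow> 'e set \<Rightarrow> ('e \<Rightarrow> bool) set \<Rightarrow> real" where
  "mu p I A = (\<Sum>G\<in>Om I \<inter> A. Wt p I G)"

definition glue :: "'e set \<Rightarrow> ('e \<Rightarrow> bool) \<Rightarrow> ('e \<Rightarrow> bool) \<Rightarrow> 'e \<Rightarrow> bool" where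
  "glue M S G = (\<lambda>e. if e \<in> M then S e else G e)"

lemma Om_eq: "Om I = (\<lambda>X e. e \<in> X) ` Pow I"
proof
  show "Om I \<subseteq> (\<lambda>X e. e \<in> X) ` Pow I"
  proof
    fix G assume "G \<in> Om I"
    hence "G = (\<lambda>e. e \<in> {e. G e})" "{e. G e} \<in> Pow I" by (auto simp: Om_def)
    thus "G \<in> (\<lambda>X e. e \<in> X) ` Pow I" by blast
  qed
qed (auto simp: Om_def)

lemma finite_Om: "finite I \<Longrightarrow> finite (Om I)"
  by (simp add: Om_eq)

lemma Wt_nonneg: "0 \<le> p \<Longrightarrow> p \<le> 1 \<Longrightarrow> 0 \<le> Wt p I G"
  unfolding Wt_def by (intro prod_nonneg) auto

lemma mu_nonneg: "0 \<le> p \<Longrightarrow> p \<le> 1 \<Longrightarrow> 0 \<le> mu p I A"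
  unfolding mu_def by (intro sum_nonneg Wt_nonneg) auto

lemma glue_bij:
  assumes "M \<subseteq> I"
  shows "bij_betw (\<lambda>(S,G). glue M S G) (Om M \<times> Om (I - M)) (Om I)"
  apply (rule bij_betwI[where g = "\<lambda>G. (\<lambda>e. e \<in> M \<and> G e, \<lambda>e. e \<notin> M \<and> G e)"])
  using assms by (auto simp: Om_def glue_def fun_eq_iff)

lemma sum_Om_split:
  assumes "finite I" "M \<subseteq> I"
  shows "(\<Sum>G\<in>Om I. F G) = (\<Sum>S\<in>Om M. \<Sum>G\<in>Om (I - M). F (glue M S G))"
proof -
  have fin: "finite M" "finite (I - M)" using assms finite_subset by auto
  have "(\<Sum>G\<in>Om I. F G) = (\<Sum>x\<in>Om M \<times> Om (I - M). F ((\<lambda>(S,G). glue M S G) x))"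
    using sum.reindex_bij_betw[OF glue_bij[OF assms(2)], of F] by simp
  also have "\<dots> = (\<Sum>S\<in>Om M. \<Sum>G\<in>Om (I - M). F (glue M S G))"
    using sum.cartesian_product[of "\<lambda>S G. F (glue M S G)" "Om (I - M)" "Om M"]
    by (simp add: case_prod_beta)
  finally show ?thesis .
qed

lemma Wt_glue:
  assumes "finite I" "M \<subseteq> I"
  shows "Wt p I (glue M S G) = Wt p M S * Wt p (I - M) G"
proof -
  have fin: "finite M" using assms finite_subset by auto
  have "Wt p I (glue M S G) = (\<Prod>e\<in>I - M. if glue M S G e then p else 1 - p) * (\<Prod>e\<in>M. if glue M S G e then p else 1 - p)"
    unfolding Wt_def using prod.subset_diff[OF assms(2) assms(1)] by simp
  also have "\<dots> = Wt p (I - M) G * Wt p M S"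
    unfolding Wt_def glue_def by (intro arg_cong2[where f="(*)"] prod.cong) auto
  finally show ?thesis by simp
qed

lemma mu_alt: "finite I \<Longrightarrow> mu p I A = (\<Sum>G\<in>Om I. if G \<in> A then Wt p I G else 0)"
  unfolding mu_def by (simp add: sum.inter_restrict finite_Om)

lemma mu_split:
  assumes "finite I" "M \<subseteq> I"
  shows "mu p I A = (\<Sum>S\<in>Om M. Wt p M S * mu p (I - M) {G. glue M S G \<in> A})"
proof -
  have fin: "finite M" "finite (I - M)" using assms finite_subset by auto
  have "mu p I A = (\<Sum>S\<in>Om M. \<Sum>G\<in>Om (I - M). if glue M S G \<in> A then Wt p I (glue M S G) else 0)"
    by (simp add: mu_alt[OF assms(1)] sum_Om_split[OF assms])
  also have "\<dots> = (\<Sum>S\<in>Om M. Wt p M S * mu p (I - M) {G. glue M S G \<in> A})"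
  proof (intro sum.cong refl)
    fix S assume "S \<in> Om M"
    have "(\<Sum>G\<in>Om (I - M). if glue M S G \<in> A then Wt p I (glue M S G) else 0)
        = (\<Sum>G\<in>Om (I - M). Wt p M S * (if glue M S G \<in> A then Wt p (I - M) G else 0))"
      by (intro sum.cong refl) (simp add: Wt_glue[OF assms])
    also have "\<dots> = Wt p M S * mu p (I - M) {G. glue M S G \<in> A}"
      by (simp add: mu_alt[OF fin(2)] sum_distrib_left)
    finally show "(\<Sum>G\<in>Om (I - M). if glue M S G \<in> A then Wt p I (glue M S G) else 0) = Wt p M S * mu p (I - M) {G. glue M S G \<in> A}" .
  qed
  finally show ?thesis .
qed

lemma Om_single: "Om {x} = {\<lambda>_. False, \<lambda>e. e = x}"
proof
  show "Om {x} \<subseteq> {\<lambda>_. False, \<lambda>e. e = x}"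
  proof
    fix G assume "G \<in> Om {x}"
    hence "G = (if G x then (\<lambda>e. e = x) else (\<lambda>_. False))" by (auto simp: Om_def fun_eq_iff)
    thus "G \<in> {\<lambda>_. False, \<lambda>e. e = x}" by (auto split: if_splits)
  qed
qed (auto simp: Om_def)

lemma glue_single: "glue {x} S G = G(x := S x)"
  by (auto simp: glue_def fun_eq_iff)

lemma Wt_single: "Wt p {x} S = (if S x then p else 1 - p)"
  by (simp add: Wt_def)

lemma mu_insert:
  assumes "finite I" "x \<notin> I"
  shows "mu p (insert x I) A = (1 - p) * mu p I {G. G(x := False) \<in> A} + p * mu p I {G. G(x := True) \<in> A}"
proof -
  have d: "(\<lambda>_. False) \<noteq> (\<lambda>e. e = x)" by (auto simp: fun_eq_iff)
  have e: "insert x I - {x} = I" using assms by auto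
  show ?thesis
    using mu_split[of "insert x I" "{x}" p A] assms d
    by (simp add: Om_single glue_single Wt_single e)
qed

lemma Om_empty: "Om {} = {\<lambda>_. False}" by (auto simp: Om_def fun_eq_iff)

lemma sum_prod_Om:
  fixes g :: "'e \<Rightarrow> bool \<Rightarrow> real"
  assumes "finite I"
  shows "(\<Sum>G\<in>Om I. \<Prod>e\<in>I. g e (G e)) = (\<Prod>e\<in>I. g e True + g e False)"
  using assms
proof (induction I rule: finite_induct)
  case empty
  thus ?case by (simp add: Om_empty)
next
  case (insert x I)
  have d: "(\<lambda>_. False) \<noteq> (\<lambda>e. e = x)" by (auto simp: fun_eq_iff)
  have e: "insert x I - {x} = I" using insert by auto
  have sub: "{x} \<subseteq> insert x I" by auto
  have *: "\<And>S G. (\<Prod>e\<in>insert x I. g e (glue {x} S G e)) = g x (S x) * (\<Prod>e\<in>I. g e (G e))"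
  proof -
    fix S G
    have "(\<Prod>e\<in>I. g e (glue {x} S G e)) = (\<Prod>e\<in>I. g e (G e))"
      using insert(2) by (intro prod.cong) (auto simp: glue_def)
    moreover have "glue {x} S G x = S x" by (simp add: glue_def)
    ultimately show "(\<Prod>e\<in>insert x I. g e (glue {x} S G e)) = g x (S x) * (\<Prod>e\<in>I. g e (G e))"
      using insert(1,2) by simp
  qed
  have "(\<Sum>G\<in>Om (insert x I). \<Prod>e\<in>insert x I. g e (G e))
      = (\<Sum>S\<in>Om {x}. \<Sum>G\<in>Om I. \<Prod>e\<in>insert x I. g e (glue {x} S G e))"
    using sum_Om_split[OF finite.insertI[OF insert(1)] sub] e by simp
  also have "\<dots> = g x False * (\<Sum>G\<in>Om I. \<Prod>e\<in>I. g e (G e)) + g x True * (\<Sum>G\<in>Om I. \<Prod>e\<in>I. g e (G e))"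
    using d by (simp add: * Om_single sum_distrib_left)
  also have "\<dots> = (g x True + g x False) * (\<Prod>e\<in>I. g e True + g e False)"
    by (simp add: insert.IH algebra_simps)
  finally show ?case using insert by simp
qed

lemma mu_UNIV: "finite I \<Longrightarrow> mu p I UNIV = 1"
  unfolding mu_def Wt_def using sum_prod_Om[of I "\<lambda>e b. if b then p else 1 - p"] by simp

lemma mu_empty: "mu p I {} = 0"
  by (simp add: mu_def)

lemma mu_compl: "finite I \<Longrightarrow> mu p I (- A) = 1 - mu p I A"
proof -
  assume f: "finite I"
  have "mu p I UNIV = mu p I A + mu p I (- A)"
    unfolding mu_def
    by (subst sum.union_disjoint[symmetric]) (auto simp: finite_Om f intro!: sum.cong)
  thus ?thesis using mu_UNIV[OF f] by simp
qed

lemma mu_mono: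
  assumes "finite I" "0 \<le> p" "p \<le> 1" "A \<subseteq> B"
  shows "mu p I A \<le> mu p I B"
  unfolding mu_def using assms by (intro sum_mono2 finite_Int disjI1 finite_Om Wt_nonneg) auto

lemma mu_diff:
  assumes "finite I"
  shows "mu p I (A \<inter> B) = mu p I A - mu p I (A \<inter> - B)"
proof -
  have "mu p I A = mu p I (A \<inter> B) + mu p I (A \<inter> - B)"
    unfolding mu_def
    by (subst sum.union_disjoint[symmetric]) (auto simp: finite_Om assms intro!: sum.cong)
  thus ?thesis by simp
qed

lemma mu_marg:
  assumes "finite I" "J \<subseteq> I" and dep: "\<And>G H. (\<And>e. e \<in> J \<Longrightarrow> G e = H e) \<Longrightarrow> G \<in> A \<longleftrightarrow> H \<in> A"
  shows "mu p I A = mu p J A"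
proof -
  have fin: "finite J" "finite (I - J)" using assms finite_subset by auto
  have eq: "\<And>S. {G. glue J S G \<in> A} = (if S \<in> A then UNIV else {})"
  proof -
    fix S
    have "\<And>G. glue J S G \<in> A \<longleftrightarrow> S \<in> A" by (rule dep) (simp add: glue_def)
    thus "{G. glue J S G \<in> A} = (if S \<in> A then UNIV else {})" by auto
  qed
  have "mu p I A = (\<Sum>S\<in>Om J. Wt p J S * mu p (I - J) {G. glue J S G \<in> A})"
    using mu_split[OF assms(1,2), of p A] .
  also have "\<dots> = (\<Sum>S\<in>Om J. if S \<in> A then Wt p J S else 0)"
    by (intro sum.cong refl) (simp add: eq mu_UNIV[OF fin(2)] mu_empty)
  finally have "mu p I A = (\<Sum>S\<in>Om J. if S \<in> A then Wt p J S else 0)" .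
  thus ?thesis by (simp add: mu_alt[OF fin(1)])
qed

definition up :: "('e \<Rightarrow> bool) set \<Rightarrow> bool" where
  "up A \<longleftrightarrow> (\<forall>G H. G \<in> A \<longrightarrow> (\<forall>e. G e \<longrightarrow> H e) \<longrightarrow> H \<in> A)"

lemma up_Int: "up A \<Longrightarrow> up B \<Longrightarrow> up (A \<inter> B)"
  unfolding up_def by blast

lemma up_upd: "up A \<Longrightarrow> up {G. G(x := b) \<in> A}"
  unfolding up_def by (auto elim!: allE)

lemma cheb:
  fixes a0 a1 b0 b1 p :: real
  assumes "0 \<le> p" "p \<le> 1" "a0 \<le> a1" "b0 \<le> b1"
  shows "((1 - p) * a0 + p * a1) * ((1 - p) * b0 + p * b1) \<le> (1 - p) * (a0 * b0) + p * (a1 * b1)"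
proof -
  have "(1 - p) * (a0 * b0) + p * (a1 * b1) - ((1 - p) * a0 + p * a1) * ((1 - p) * b0 + p * b1)
        = p * (1 - p) * ((a1 - a0) * (b1 - b0))"
    by (simp add: algebra_simps)
  also have "\<dots> \<ge> 0" using assms by (intro mult_nonneg_nonneg) auto
  finally show ?thesis by simp
qed

lemma harris:
  assumes "finite I" "0 \<le> p" "p \<le> 1" "up A" "up B"
  shows "mu p I A * mu p I B \<le> mu p I (A \<inter> B)"
  using assms(1,4,5)
proof (induction I arbitrary: A B rule: finite_induct)
  case empty
  have "mu p {} A \<le> 1" "mu p {} B \<le> 1"
    using mu_mono[of "{}" p A UNIV] mu_mono[of "{}" p B UNIV] assms(2,3) by (auto simp: mu_UNIV)
  moreover have "mu p {} A * mu p {} B \<le> mu p {} (A \<inter> B)"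
  proof (cases "(\<lambda>_. False) \<in> A \<and> (\<lambda>_. False) \<in> B")
    case True thus ?thesis by (simp add: mu_def Om_empty Wt_def)
  next
    case False thus ?thesis by (auto simp: mu_def Om_empty Wt_def)
  qed
  ultimately show ?case by simp
next
  case (insert x I)
  let ?A0 = "{G. G(x := False) \<in> A}" and ?A1 = "{G. G(x := True) \<in> A}"
  let ?B0 = "{G. G(x := False) \<in> B}" and ?B1 = "{G. G(x := True) \<in> B}"
  have u: "up ?A0" "up ?A1" "up ?B0" "up ?B1" using insert.prems by (auto intro: up_upd)
  have s: "?A0 \<subseteq> ?A1" "?B0 \<subseteq> ?B1" using insert.prems unfolding up_def
    by auto
  have "mu p I ?A0 \<le> mu p I ?A1" "mu p I ?B0 \<le> mu p I ?B1"
    using s insert(1) assms(2,3) by (auto intro: mu_mono)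
  hence "mu p (insert x I) A * mu p (insert x I) B \<le>
      (1 - p) * (mu p I ?A0 * mu p I ?B0) + p * (mu p I ?A1 * mu p I ?B1)"
    using cheb assms(2,3) by (simp add: mu_insert[OF insert(1,2)])
  also have "\<dots> \<le> (1 - p) * mu p I (?A0 \<inter> ?B0) + p * mu p I (?A1 \<inter> ?B1)"
    using insert.IH u assms(2,3) by (intro add_mono mult_left_mono) auto
  also have "\<dots> = mu p (insert x I) (A \<inter> B)"
    by (simp add: mu_insert[OF insert(1,2)] Collect_conj_eq)
  finally show ?case .
qed

lemma harris_iter:
  assumes "finite I" "0 \<le> p" "p \<le> 1" "up E" "finite C" "\<And>v. v \<in> C \<Longrightarrow> up (U v)"
  shows "mu p I E * (\<Prod>v\<in>C. mu p I (U v)) \<le> mu p I (E \<inter> (\<Inter>v\<in>C. U v))"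
  using assms(5,6)
proof (induction C rule: finite_induct)
  case empty thus ?case by simp
next
  case (insert x C)
  have upc: "up (E \<inter> (\<Inter>v\<in>C. U v))"
    using insert assms(4) unfolding up_def by blast
  have "mu p I E * (\<Prod>v\<in>insert x C. mu p I (U v)) = (mu p I E * (\<Prod>v\<in>C. mu p I (U v))) * mu p I (U x)"
    using insert(1,2) by (simp add: algebra_simps)
  also have "\<dots> \<le> mu p I (E \<inter> (\<Inter>v\<in>C. U v)) * mu p I (U x)"
    using insert assms by (intro mult_right_mono mu_nonneg) auto
  also have "\<dots> \<le> mu p I ((E \<inter> (\<Inter>v\<in>C. U v)) \<inter> U x)"
    using harris[OF assms(1-3) upc insert.prems[of x]] by simp
  also have "(E \<inter> (\<Inter>v\<in>C. U v)) \<inter> U x = E \<inter> (\<Inter>v\<in>insert x C. U v)" by auto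
  finally show ?case .
qed

lemma card_upd:
  assumes "finite M" "x \<notin> M"
  shows "card {e \<in> insert x M. (G(x := b)) e} = (if b then 1 else 0) + card {e \<in> M. G e}"
proof -
  have eq: "{e \<in> M. (G(x := b)) e} = {e \<in> M. G e}" using assms by auto
  show ?thesis
  proof (cases b)
    case True
    hence "{e \<in> insert x M. (G(x := b)) e} = insert x {e \<in> M. (G(x := b)) e}" by auto
    thus ?thesis using True assms eq by simp
  next
    case False
    hence "{e \<in> insert x M. (G(x := b)) e} = {e \<in> M. (G(x := b)) e}" by auto
    thus ?thesis using False eq by simp
  qed
qed

lemma mu_cnt0:
  assumes "finite M"
  shows "mu p M {G. card {e \<in> M. G e} = 0} = (1 - p) ^ card M"
  using assms
proof (induction M rule: finite_induct)
  case empty thus ?case by (simp add: mu_def Om_empty Wt_def)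
next
  case (insert x M)
  have a: "{G. G(x := False) \<in> {G. card {e \<in> insert x M. G e} = 0}} = {G. card {e \<in> M. G e} = 0}"
    using card_upd[OF insert(1,2)] by simp
  have b: "{G. G(x := True) \<in> {G. card {e \<in> insert x M. G e} = 0}} = {}"
    using card_upd[OF insert(1,2)] by simp
  show ?case using mu_insert[OF insert(1,2), of p "{G. card {e \<in> insert x M. G e} = 0}"] insert
    unfolding a b by (simp add: mu_empty)
qed

lemma mu_cnt1:
  assumes "finite M"
  shows "mu p M {G. card {e \<in> M. G e} \<le> 1} = (1 - p) ^ card M + real (card M) * p * (1 - p) ^ (card M - 1)"
  using assms
proof (induction M rule: finite_induct)
  case empty
  have "mu p {} {G. card {e \<in> {}. G e} \<le> 1} = 1" by (simp add: mu_def Om_empty Wt_def)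
  thus ?case by simp
next
  case (insert x M)
  have a: "{G. G(x := False) \<in> {G. card {e \<in> insert x M. G e} \<le> 1}} = {G. card {e \<in> M. G e} \<le> 1}"
    using card_upd[OF insert(1,2)] by simp
  have b: "{G. G(x := True) \<in> {G. card {e \<in> insert x M. G e} \<le> 1}} = {G. card {e \<in> M. G e} = 0}"
    using card_upd[OF insert(1,2)] by simp
  have "mu p (insert x M) {G. card {e \<in> insert x M. G e} \<le> 1}
     = (1 - p) * ((1 - p) ^ card M + real (card M) * p * (1 - p) ^ (card M - 1)) + p * (1 - p) ^ card M"
    using mu_insert[OF insert(1,2), of p "{G. card {e \<in> insert x M. G e} \<le> 1}"] insert
    unfolding a b by (simp only: mu_cnt0[OF insert(1)])
  also have "\<dots> = (1 - p) ^ Suc (card M) + real (Suc (card M)) * p * (1 - p) ^ card M"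
  proof (cases "card M")
    case 0 thus ?thesis by simp
  next
    case (Suc k) thus ?thesis by (simp add: algebra_simps)
  qed
  finally show ?case using insert by simp
qed

lemma mu_le1: "finite I \<Longrightarrow> 0 \<le> p \<Longrightarrow> p \<le> 1 \<Longrightarrow> mu p I A \<le> 1"
  using mu_mono[of I p A UNIV] by (simp add: mu_UNIV)

lemma mu_indep:
  assumes "finite I" "M \<subseteq> I"
    and X: "\<And>G H. (\<And>e. e \<in> M \<Longrightarrow> G e = H e) \<Longrightarrow> G \<in> X \<longleftrightarrow> H \<in> X"
    and Y: "\<And>G H. (\<And>e. e \<notin> M \<Longrightarrow> G e = H e) \<Longrightarrow> G \<in> Y \<longleftrightarrow> H \<in> Y"
  shows "mu p I (X \<inter> Y) = mu p M X * mu p (I - M) Y"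
proof -
  have fin: "finite M" using finite_subset[OF assms(2,1)] .
  have eq: "\<And>S. {G. glue M S G \<in> X \<inter> Y} = (if S \<in> X then Y else {})"
  proof -
    fix S
    have "\<And>G. glue M S G \<in> X \<longleftrightarrow> S \<in> X" by (rule X) (simp add: glue_def)
    moreover have "\<And>G. glue M S G \<in> Y \<longleftrightarrow> G \<in> Y" by (rule Y) (simp add: glue_def)
    ultimately show "{G. glue M S G \<in> X \<inter> Y} = (if S \<in> X then Y else {})" by auto
  qed
  have "mu p I (X \<inter> Y) = (\<Sum>S\<in>Om M. Wt p M S * mu p (I - M) {G. glue M S G \<in> X \<inter> Y})"
    using mu_split[OF assms(1,2)] .
  also have "\<dots> = (\<Sum>S\<in>Om M. (if S \<in> X then Wt p M S else 0) * mu p (I - M) Y)"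
    by (intro sum.cong refl) (simp only: eq, simp add: mu_empty)
  also have "\<dots> = mu p M X * mu p (I - M) Y"
    by (simp add: mu_alt[OF fin] sum_distrib_right)
  finally show ?thesis .
qed

definition rowset :: "nat \<Rightarrow> nat \<Rightarrow> (nat \<times> nat) set" where "rowset N i = {i} \<times> {..<N}"
definition colset :: "nat \<Rightarrow> nat \<Rightarrow> (nat \<times> nat) set" where "colset N j = {..<N} \<times> {j}"
definition rdeg :: "nat \<Rightarrow> (nat \<times> nat \<Rightarrow> bool) \<Rightarrow> nat \<Rightarrow> nat" where
  "rdeg N G i = card {e \<in> rowset N i. G e}"
definition cdeg :: "nat \<Rightarrow> (nat \<times> nat \<Rightarrow> bool) \<Rightarrow> nat \<Rightarrow> nat" where
  "cdeg N G j = card {e \<in> colset N j. G e}"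
definition Ev :: "nat \<Rightarrow> nat set \<Rightarrow> nat set \<Rightarrow> (nat \<times> nat \<Rightarrow> bool) set" where
  "Ev N K C = {G. (\<forall>i\<in>K. 2 \<le> rdeg N G i) \<and> (\<forall>j\<in>C. 2 \<le> cdeg N G j)}"

lemma finite_rowset[simp]: "finite (rowset N i)" and finite_colset[simp]: "finite (colset N j)"
  by (auto simp: rowset_def colset_def)

lemma card_rowset: "card (rowset N i) = N" and card_colset: "card (colset N j) = N"
  by (auto simp: rowset_def colset_def card_cartesian_product)

lemma card_mono_filter:
  assumes "finite R" "\<And>e. G e \<Longrightarrow> H e"
  shows "card {e \<in> R. G e} \<le> card {e \<in> R. H e}"
  using assms by (intro card_mono) auto

lemma up_Ev: "up (Ev N K C)"
  unfolding up_def
proof (intro allI impI)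
  fix G H :: "nat \<times> nat \<Rightarrow> bool"
  assume G: "G \<in> Ev N K C" and le: "\<forall>e. G e \<longrightarrow> H e"
  have "\<And>i. rdeg N G i \<le> rdeg N H i" unfolding rdeg_def
    using le by (intro card_mono_filter) auto
  moreover have "\<And>j. cdeg N G j \<le> cdeg N H j" unfolding cdeg_def
    using le by (intro card_mono_filter) auto
  ultimately show "H \<in> Ev N K C" using G unfolding Ev_def by (auto intro: order.trans)
qed

lemma up_card: "finite R \<Longrightarrow> up {G. k \<le> card {e \<in> R. G e}}"
  unfolding up_def
proof (intro allI impI)
  fix G H :: "'a \<Rightarrow> bool"
  assume "finite R" "G \<in> {G. k \<le> card {e \<in> R. G e}}" "\<forall>e. G e \<longrightarrow> H e"
  moreover have "card {e \<in> R. G e} \<le> card {e \<in> R. H e}"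
    using calculation by (intro card_mono_filter) auto
  ultimately show "H \<in> {G. k \<le> card {e \<in> R. G e}}" by auto
qed

lemma rowset_sub: "i < N \<Longrightarrow> rowset N i \<subseteq> {..<N} \<times> {..<N}"
  and colset_sub: "j < N \<Longrightarrow> colset N j \<subseteq> {..<N} \<times> {..<N}"
  by (auto simp: rowset_def colset_def)

definition qq :: "nat \<Rightarrow> real \<Rightarrow> real" where "qq N p = (1 - p) ^ N + real N * p * (1 - p) ^ (N - 1)"

lemma row_step:
  assumes "0 \<le> p" "p \<le> 1" "i < N" "i \<notin> K"
  shows "mu p ({..<N} \<times> {..<N}) (Ev N K {} \<inter> {G. rdeg N G i \<le> 1}) = qq N p * mu p ({..<N} \<times> {..<N}) (Ev N K {})"
proof -
  let ?I = "{..<N} \<times> {..<N}" and ?M = "rowset N i"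
  have fI: "finite ?I" by simp
  have Mi: "?M \<subseteq> ?I" using rowset_sub[OF assms(3)] .
  have depE: "G \<in> Ev N K {} \<longleftrightarrow> H \<in> Ev N K {}" if "\<And>e. e \<notin> ?M \<Longrightarrow> G e = H e" for G H
  proof -
    have "{e \<in> rowset N i'. G e} = {e \<in> rowset N i'. H e}" if "i' \<in> K" for i'
    proof -
      have "\<And>e. e \<in> rowset N i' \<Longrightarrow> e \<notin> ?M" using \<open>i' \<in> K\<close> assms(4) by (auto simp: rowset_def)
      thus ?thesis using \<open>\<And>e. e \<notin> ?M \<Longrightarrow> G e = H e\<close> by blast
    qed
    thus ?thesis by (simp add: Ev_def rdeg_def)
  qed
  have depD: "G \<in> {G. rdeg N G i \<le> 1} \<longleftrightarrow> H \<in> {G. rdeg N G i \<le> 1}" if "\<And>e. e \<in> ?M \<Longrightarrow> G e = H e" for G H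
  proof -
    have "{e \<in> rowset N i. G e} = {e \<in> rowset N i. H e}" using that by auto
    thus ?thesis by (simp add: rdeg_def)
  qed
  have "mu p ?I ({G. rdeg N G i \<le> 1} \<inter> Ev N K {}) = mu p ?M {G. rdeg N G i \<le> 1} * mu p (?I - ?M) (Ev N K {})"
    by (rule mu_indep[OF fI Mi depD depE])
  moreover have "mu p ?I (UNIV \<inter> Ev N K {}) = mu p ?M UNIV * mu p (?I - ?M) (Ev N K {})"
    by (rule mu_indep[OF fI Mi _ depE]) simp
  moreover have "mu p ?M {G. rdeg N G i \<le> 1} = qq N p"
    using mu_cnt1[OF finite_rowset, of p N i] by (simp add: rdeg_def card_rowset qq_def)
  ultimately show ?thesis by (simp add: mu_UNIV Int_commute)
qed

lemma Ev_insert_row: "Ev N (insert i K) C = Ev N K C \<inter> - {G. rdeg N G i \<le> 1}"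
  by (auto simp: Ev_def)
lemma Ev_insert_col: "Ev N K (insert j C) = Ev N K C \<inter> - {G. cdeg N G j \<le> 1}"
  by (auto simp: Ev_def)

lemma rows_only:
  assumes "0 \<le> p" "p \<le> 1" "finite K" "K \<subseteq> {..<N}"
  shows "mu p ({..<N} \<times> {..<N}) (Ev N K {}) = (1 - qq N p) ^ card K"
  using assms(3,4)
proof (induction K rule: finite_induct)
  case empty
  have "Ev N {} {} = UNIV" by (simp add: Ev_def)
  thus ?case by (simp add: mu_UNIV)
next
  case (insert i K)
  have "mu p ({..<N} \<times> {..<N}) (Ev N (insert i K) {})
      = mu p ({..<N} \<times> {..<N}) (Ev N K {}) - mu p ({..<N} \<times> {..<N}) (Ev N K {} \<inter> {G. rdeg N G i \<le> 1})"
    unfolding Ev_insert_row by (subst mu_diff) auto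
  also have "\<dots> = (1 - qq N p) * mu p ({..<N} \<times> {..<N}) (Ev N K {})"
    using row_step[OF assms(1,2)] insert by (simp add: algebra_simps)
  finally show ?case using insert by simp
qed

lemma up_glue: "up A \<Longrightarrow> up {G. glue M S G \<in> A}"
  unfolding up_def glue_def by (smt (verit) mem_Collect_eq)

lemma card_rowset_diff:
  assumes "i < N" "j < N"
  shows "card (rowset N i - colset N j) = N - 1"
proof -
  have "rowset N i - colset N j = {i} \<times> ({..<N} - {j})" using assms by (auto simp: rowset_def colset_def)
  thus ?thesis using assms by (simp add: card_cartesian_product)
qed

definition rr :: "nat \<Rightarrow> real \<Rightarrow> real" where
  "rr N p = (1 - p) ^ (N - 1) + real (N - 1) * p * (1 - p) ^ (N - 1 - 1)"

lemma mu_U: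
  assumes "0 \<le> p" "p \<le> 1" "i < N" "j < N"
  shows "mu p ({..<N} \<times> {..<N} - colset N j) {G. 2 \<le> card {e \<in> rowset N i - colset N j. G e}} = 1 - rr N p"
proof -
  let ?J = "rowset N i - colset N j"
  have sub: "?J \<subseteq> {..<N} \<times> {..<N} - colset N j" using rowset_sub[OF assms(3)] by auto
  have "mu p ({..<N} \<times> {..<N} - colset N j) {G. 2 \<le> card {e \<in> ?J. G e}} = mu p ?J {G. 2 \<le> card {e \<in> ?J. G e}}"
  proof (rule mu_marg)
    fix G H :: "nat \<times> nat \<Rightarrow> bool" assume "\<And>e. e \<in> ?J \<Longrightarrow> G e = H e"
    hence "{e \<in> ?J. G e} = {e \<in> ?J. H e}" by auto
    thus "G \<in> {G. 2 \<le> card {e \<in> ?J. G e}} \<longleftrightarrow> H \<in> {G. 2 \<le> card {e \<in> ?J. G e}}" by simp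
  qed (use sub in auto)
  also have "{G. 2 \<le> card {e \<in> ?J. G e}} = - {G. card {e \<in> ?J. G e} \<le> 1}" by auto
  hence "mu p ?J {G. 2 \<le> card {e \<in> ?J. G e}} = mu p ?J (- {G. card {e \<in> ?J. G e} \<le> 1})" by simp
  also have "mu p ?J (- {G. card {e \<in> ?J. G e} \<le> 1}) = 1 - rr N p"
    using mu_cnt1[of ?J p] mu_compl[of ?J p "{G. card {e \<in> ?J. G e} \<le> 1}"]
    by (simp only: card_rowset_diff[OF assms(3,4)] rr_def finite_Diff finite_rowset)
  finally show ?thesis .
qed

lemma rr_bounds:
  assumes "0 \<le> p" "p \<le> 1" "1 \<le> N"
  shows "0 \<le> rr N p" "rr N p \<le> 1"
proof -
  let ?J = "rowset N 0 - colset N 0"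
  have "mu p ?J {G. card {e \<in> ?J. G e} \<le> 1} = rr N p"
    using mu_cnt1[of ?J p] card_rowset_diff[of 0 N 0] assms by (simp only: rr_def finite_Diff finite_rowset)
  moreover have "0 \<le> mu p ?J {G. card {e \<in> ?J. G e} \<le> 1}" "mu p ?J {G. card {e \<in> ?J. G e} \<le> 1} \<le> 1"
    using mu_nonneg[OF assms(1,2)] mu_le1[of ?J p] assms by auto
  ultimately show "0 \<le> rr N p" "rr N p \<le> 1" by auto
qed

lemma qq_bounds:
  assumes "0 \<le> p" "p \<le> 1"
  shows "0 \<le> qq N p" "qq N p \<le> 1"
proof -
  have "mu p (rowset N 0) {G. card {e \<in> rowset N 0. G e} \<le> 1} = qq N p"
    using mu_cnt1[of "rowset N 0" p] by (simp only: card_rowset qq_def finite_rowset)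
  moreover have "0 \<le> mu p (rowset N 0) {G. card {e \<in> rowset N 0. G e} \<le> 1}" "mu p (rowset N 0) {G. card {e \<in> rowset N 0. G e} \<le> 1} \<le> 1"
    using mu_nonneg[OF assms(1,2)] mu_le1[of "rowset N 0" p] assms by auto
  ultimately show "0 \<le> qq N p" "qq N p \<le> 1" by auto
qed

lemma col_step:
  assumes p: "0 < p" "p \<le> 1" and j: "j < N" "j \<notin> C" and K: "K \<subseteq> {..<N}"
  defines "d \<equiv> 1 / (1 - (1 - p) * rr N p)"
  defines "\<rho> \<equiv> (1 - rr N p) * d"
  shows "qq N p * \<rho> ^ card K * mu p ({..<N} \<times> {..<N}) (Ev N K C)
          \<le> mu p ({..<N} \<times> {..<N}) (Ev N K C \<inter> {G. cdeg N G j \<le> 1})"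
proof -
  let ?I = "{..<N} \<times> {..<N}" and ?M = "colset N j"
  let ?I' = "?I - ?M" and ?E = "Ev N K C"
  define ES where "ES S = {G. glue ?M S G \<in> ?E}" for S
  define m0 where "m0 = mu p ?I' (ES (\<lambda>_. False))"
  define U where "U i = {G. 2 \<le> card {e \<in> rowset N i - ?M. G e}}" for i
  define r where "r = rr N p"
  have p0: "0 \<le> p" using p by simp
  have N1: "1 \<le> N" using j by simp
  have fI: "finite ?I" by simp
  have fI': "finite ?I'" by simp
  have fM: "finite ?M" by simp
  have MI: "?M \<subseteq> ?I" using colset_sub[OF j(1)] .
  have r01: "0 \<le> r" "r \<le> 1" using rr_bounds[OF p0 p(2) N1] by (auto simp: r_def)
  have den: "0 < 1 - (1 - p) * r"
  proof -
    have "(1 - p) * r \<le> (1 - p) * 1" using r01 p by (intro mult_left_mono) auto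
    thus ?thesis using p by simp
  qed
  have d0: "0 < d" using den by (simp add: d_def r_def)
  have rho0: "0 \<le> \<rho>" using d0 r01 by (simp add: \<rho>_def r_def)
  have key1: "p * d + (1 - p) * \<rho> = 1"
  proof -
    have "p * d + (1 - p) * \<rho> = d * (1 - (1 - p) * r)" by (simp add: \<rho>_def r_def algebra_simps)
    thus ?thesis using den by (simp add: d_def r_def)
  qed
  have m0nn: "0 \<le> m0" unfolding m0_def using mu_nonneg[OF p0 p(2)] .
  have E0S: "ES (\<lambda>_. False) \<subseteq> ES S" for S
  proof
    fix G assume "G \<in> ES (\<lambda>_. False)"
    hence a: "glue ?M (\<lambda>_. False) G \<in> ?E" by (simp add: ES_def)
    have b: "\<forall>e. glue ?M (\<lambda>_. False) G e \<longrightarrow> glue ?M S G e" by (simp add: glue_def)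
    have "glue ?M S G \<in> ?E" using up_Ev[of N K C] a b unfolding up_def by blast
    thus "G \<in> ES S" by (simp add: ES_def)
  qed
  have harr: "(\<Prod>i\<in>{i\<in>K. S (i, j)}. (1 - r)) * mu p ?I' (ES S) \<le> m0" for S
  proof -
    have fK: "finite {i\<in>K. S (i, j)}" using finite_subset[OF K finite_lessThan] by simp
    have upES: "up (ES S)" unfolding ES_def by (rule up_glue[OF up_Ev])
    have upU: "\<And>i. up (U i)" unfolding U_def by (rule up_card) simp
    have "mu p ?I' (ES S) * (\<Prod>i\<in>{i\<in>K. S (i, j)}. mu p ?I' (U i)) \<le> mu p ?I' (ES S \<inter> (\<Inter>i\<in>{i\<in>K. S (i, j)}. U i))"
      by (rule harris_iter[OF fI' p0 p(2) upES fK upU])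
    also have "\<dots> \<le> m0" unfolding m0_def
    proof (rule mu_mono[OF fI' p0 p(2)], rule subsetI)
      fix G assume G: "G \<in> ES S \<inter> (\<Inter>i\<in>{i\<in>K. S (i, j)}. U i)"
      have GE: "glue ?M S G \<in> ?E" using G by (simp add: ES_def)
      have "2 \<le> rdeg N (glue ?M (\<lambda>_. False) G) i" if iK: "i \<in> K" for i
      proof (cases "S (i, j)")
        case True
        hence "i \<in> {i\<in>K. S (i, j)}" using iK by simp
        hence "G \<in> U i" using G by blast
        moreover have "{e \<in> rowset N i. glue ?M (\<lambda>_. False) G e} = {e \<in> rowset N i - ?M. G e}"
          by (auto simp: glue_def)
        ultimately show ?thesis by (simp add: U_def rdeg_def)
      next
        case False
        have "{e \<in> rowset N i. glue ?M (\<lambda>_. False) G e} = {e \<in> rowset N i. glue ?M S G e}"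
          using False by (auto simp: glue_def rowset_def colset_def)
        thus ?thesis using GE iK by (simp add: Ev_def rdeg_def)
      qed
      moreover have "2 \<le> cdeg N (glue ?M (\<lambda>_. False) G) j'" if jC: "j' \<in> C" for j'
      proof -
        have "j' \<noteq> j" using jC j by auto
        hence "{e \<in> colset N j'. glue ?M (\<lambda>_. False) G e} = {e \<in> colset N j'. glue ?M S G e}"
          by (auto simp: glue_def colset_def)
        thus ?thesis using GE jC by (simp add: Ev_def cdeg_def)
      qed
      ultimately show "G \<in> ES (\<lambda>_. False)" by (simp add: ES_def Ev_def)
    qed
    finally have fin: "mu p ?I' (ES S) * (\<Prod>i\<in>{i\<in>K. S (i, j)}. mu p ?I' (U i)) \<le> m0" .
    have "(\<Prod>i\<in>{i\<in>K. S (i, j)}. mu p ?I' (U i)) = (\<Prod>i\<in>{i\<in>K. S (i, j)}. (1 - r))"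
    proof (rule prod.cong[OF refl])
      fix i assume "i \<in> {i\<in>K. S (i, j)}"
      hence "i < N" using K by auto
      thus "mu p ?I' (U i) = 1 - r" unfolding U_def r_def by (rule mu_U[OF p0 p(2) _ j(1)])
    qed
    thus ?thesis using fin by (simp only: mult.commute)
  qed
  define P where "P S = (\<Prod>i\<in>K. if S (i, j) then d else \<rho>)" for S
  have perS: "\<rho> ^ card K * mu p ?I' (ES S) \<le> P S * m0" for S
  proof -
    have "(\<Prod>i\<in>K. (if S (i, j) then d else \<rho>) * (if S (i, j) then 1 - r else 1)) = (\<Prod>i\<in>K. \<rho>)"
      by (intro prod.cong refl) (simp add: \<rho>_def r_def mult.commute)
    hence "\<rho> ^ card K = (\<Prod>i\<in>K. (if S (i, j) then d else \<rho>) * (if S (i, j) then 1 - r else 1))"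
      by simp
    also have "\<dots> = P S * (\<Prod>i\<in>K. if S (i, j) then 1 - r else 1)"
      by (simp only: P_def prod.distrib)
    also have "(\<Prod>i\<in>K. if S (i, j) then 1 - r else 1) = (\<Prod>i\<in>{i\<in>K. S (i, j)}. (1 - r))"
      using finite_subset[OF K finite_lessThan] by (rule prod.inter_filter[symmetric])
    finally have "\<rho> ^ card K * mu p ?I' (ES S) = P S * ((\<Prod>i\<in>{i\<in>K. S (i, j)}. (1 - r)) * mu p ?I' (ES S))"
      by simp
    also have "\<dots> \<le> P S * m0"
      using harr[of S] by (intro mult_left_mono) (auto simp: P_def d0 rho0 less_imp_le intro!: prod_nonneg)
    finally show ?thesis .
  qed
  define g where "g e b = (if b then p else 1 - p) * (if fst e \<in> K then (if b then d else \<rho>) else 1)" for e :: "nat \<times> nat" and b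
  have WP: "Wt p ?M S * P S = (\<Prod>e\<in>?M. g e (S e))" for S
  proof -
    have "P S = (\<Prod>i\<in>{..<N}. if i \<in> K then (if S (i, j) then d else \<rho>) else 1)"
      unfolding P_def using K by (intro prod.mono_neutral_cong_left) auto
    also have "\<dots> = (\<Prod>e\<in>?M. if fst e \<in> K then (if S e then d else \<rho>) else 1)"
    proof -
      have "?M = (\<lambda>i. (i, j)) ` {..<N}" by (auto simp: colset_def)
      moreover have "inj_on (\<lambda>i. (i, j)) {..<N}" by (auto simp: inj_on_def)
      ultimately show ?thesis by (simp add: prod.reindex)
    qed
    finally show ?thesis by (simp add: Wt_def g_def prod.distrib)
  qed
  have sumP: "(\<Sum>S\<in>Om ?M. Wt p ?M S * P S) = 1"
  proof -
    have "(\<Sum>S\<in>Om ?M. Wt p ?M S * P S) = (\<Prod>e\<in>?M. g e True + g e False)"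
      by (simp add: WP sum_prod_Om[OF fM])
    also have "\<dots> = 1" by (intro prod.neutral) (simp add: g_def key1)
    finally show ?thesis .
  qed
  have upper: "\<rho> ^ card K * mu p ?I ?E \<le> m0"
  proof -
    have "\<rho> ^ card K * mu p ?I ?E = \<rho> ^ card K * (\<Sum>S\<in>Om ?M. Wt p ?M S * mu p ?I' (ES S))"
      unfolding ES_def by (subst mu_split[OF fI MI]) (rule refl)
    also have "\<dots> = (\<Sum>S\<in>Om ?M. Wt p ?M S * (\<rho> ^ card K * mu p ?I' (ES S)))"
      by (subst sum_distrib_left) (intro sum.cong refl, simp only: mult.left_commute)
    also have "\<dots> \<le> (\<Sum>S\<in>Om ?M. Wt p ?M S * (P S * m0))"
      by (intro sum_mono mult_left_mono perS Wt_nonneg p0 p(2))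
    also have "\<dots> = (\<Sum>S\<in>Om ?M. Wt p ?M S * P S) * m0"
      by (subst sum_distrib_right) (intro sum.cong refl, simp only: mult.assoc)
    also have "\<dots> = m0" using sumP by simp
    finally show ?thesis .
  qed
  have lower: "qq N p * m0 \<le> mu p ?I (?E \<inter> {G. cdeg N G j \<le> 1})"
  proof -
    have cd: "cdeg N (glue ?M S G) j = cdeg N S j" for S G
    proof -
      have "{e \<in> colset N j. glue ?M S G e} = {e \<in> colset N j. S e}" by (auto simp: glue_def)
      thus ?thesis by (simp add: cdeg_def)
    qed
    have "mu p ?M {G. cdeg N G j \<le> 1} = qq N p"
      using mu_cnt1[of ?M p] by (simp only: card_colset qq_def finite_colset cdeg_def)
    hence qe: "(\<Sum>S\<in>Om ?M. if cdeg N S j \<le> 1 then Wt p ?M S else 0) = qq N p"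
      by (simp add: mu_alt[OF fM])
    have "(\<Sum>S\<in>Om ?M. Wt p ?M S * (if cdeg N S j \<le> 1 then m0 else 0))
        = (\<Sum>S\<in>Om ?M. if cdeg N S j \<le> 1 then Wt p ?M S else 0) * m0"
      by (subst sum_distrib_right) (intro sum.cong refl, simp)
    hence "qq N p * m0 = (\<Sum>S\<in>Om ?M. Wt p ?M S * (if cdeg N S j \<le> 1 then m0 else 0))"
      using qe by simp
    also have "\<dots> \<le> (\<Sum>S\<in>Om ?M. Wt p ?M S * mu p ?I' {G. glue ?M S G \<in> ?E \<inter> {G. cdeg N G j \<le> 1}})"
    proof (intro sum_mono mult_left_mono Wt_nonneg p0 p(2))
      fix S
      show "(if cdeg N S j \<le> 1 then m0 else 0) \<le> mu p ?I' {G. glue ?M S G \<in> ?E \<inter> {G. cdeg N G j \<le> 1}}"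
      proof (cases "cdeg N S j \<le> 1")
        case True
        hence "{G. glue ?M S G \<in> ?E \<inter> {G. cdeg N G j \<le> 1}} = ES S" by (auto simp: cd ES_def)
        thus ?thesis using True mu_mono[OF fI' p0 p(2) E0S[of S]] by (simp add: m0_def)
      qed (simp add: mu_nonneg[OF p0 p(2)])
    qed
    also have "\<dots> = mu p ?I (?E \<inter> {G. cdeg N G j \<le> 1})"
      by (rule mu_split[OF fI MI, symmetric])
    finally show ?thesis .
  qed
  have q0: "0 \<le> qq N p" using qq_bounds[OF p0 p(2)] by simp
  have "qq N p * \<rho> ^ card K * mu p ?I ?E \<le> qq N p * m0"
    using mult_left_mono[OF upper q0] by (simp add: mult.assoc)
  thus ?thesis using lower by linarith
qed

definition rho :: "nat \<Rightarrow> real \<Rightarrow> real" where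
  "rho N p = (1 - rr N p) * (1 / (1 - (1 - p) * rr N p))"

lemma rho_bounds:
  assumes "0 < p" "p \<le> 1" "1 \<le> N"
  shows "0 \<le> rho N p" "rho N p \<le> 1"
proof -
  have r: "0 \<le> rr N p" "rr N p \<le> 1" using rr_bounds[of p N] assms by auto
  have den: "0 < 1 - (1 - p) * rr N p"
  proof -
    have "(1 - p) * rr N p \<le> (1 - p) * 1" using r assms by (intro mult_left_mono) auto
    thus ?thesis using assms by simp
  qed
  show "0 \<le> rho N p" using den r by (simp add: rho_def)
  have "1 - rr N p \<le> 1 - (1 - p) * rr N p" using r assms by (simp add: algebra_simps)
  thus "rho N p \<le> 1" using den by (simp add: rho_def)
qed

lemma cols_bound:
  assumes p: "0 < p" "p \<le> 1" and K: "K \<subseteq> {..<N}" and C: "finite C" "C \<subseteq> {..<N}"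
  shows "mu p ({..<N} \<times> {..<N}) (Ev N K C) \<le> (1 - qq N p) ^ card K * (1 - qq N p * rho N p ^ card K) ^ card C"
  using C
proof (induction C rule: finite_induct)
  case empty
  have "finite K" using finite_subset[OF K finite_lessThan] .
  thus ?case using rows_only[of p K N] p K by simp
next
  case (insert j C)
  let ?I = "{..<N} \<times> {..<N}"
  have jN: "j < N" using insert by auto
  have p0: "0 \<le> p" using p by simp
  have N1: "1 \<le> N" using jN by simp
  have q: "0 \<le> qq N p" "qq N p \<le> 1" using qq_bounds[OF p0 p(2)] by auto
  have rh: "0 \<le> rho N p" "rho N p \<le> 1" using rho_bounds[OF p N1] by auto
  have rk: "rho N p ^ card K \<le> 1" using rh by (simp add: power_le_one)
  have f0: "0 \<le> 1 - qq N p * rho N p ^ card K"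
  proof -
    have "qq N p * rho N p ^ card K \<le> 1 * 1" using q rk rh by (intro mult_mono) auto
    thus ?thesis by simp
  qed
  have step: "qq N p * rho N p ^ card K * mu p ?I (Ev N K C) \<le> mu p ?I (Ev N K C \<inter> {G. cdeg N G j \<le> 1})"
    using col_step[OF p jN insert(2) K] by (simp add: rho_def)
  have "mu p ?I (Ev N K (insert j C)) = mu p ?I (Ev N K C) - mu p ?I (Ev N K C \<inter> {G. cdeg N G j \<le> 1})"
    unfolding Ev_insert_col by (subst mu_diff) auto
  also have "\<dots> \<le> (1 - qq N p * rho N p ^ card K) * mu p ?I (Ev N K C)"
    using step by (simp add: algebra_simps)
  also have "\<dots> \<le> (1 - qq N p * rho N p ^ card K) * ((1 - qq N p) ^ card K * (1 - qq N p * rho N p ^ card K) ^ card C)"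
    using insert f0 by (intro mult_left_mono) auto
  finally show ?case using insert by (simp add: algebra_simps)
qed

definition tr :: "(nat \<times> nat \<Rightarrow> bool) \<Rightarrow> nat \<times> nat \<Rightarrow> bool" where
  "tr G = (\<lambda>e. G (prod.swap e))"

lemma tr_tr[simp]: "tr (tr G) = G" by (simp add: tr_def)

lemma rdeg_tr: "rdeg N (tr G) i = cdeg N G i"
proof -
  have "{e \<in> rowset N i. tr G e} = prod.swap ` {e \<in> colset N i. G e}"
    by (auto simp: tr_def rowset_def colset_def image_iff)
  thus ?thesis by (simp add: rdeg_def cdeg_def card_image)
qed

lemma cdeg_tr: "cdeg N (tr G) j = rdeg N G j"
  using rdeg_tr[of N "tr G" j] by simp

lemma Ev_tr: "G \<in> Ev N K C \<longleftrightarrow> tr G \<in> Ev N C K"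
  by (auto simp: Ev_def rdeg_tr cdeg_tr)

lemma mu_tr:
  shows "mu p ({..<N} \<times> {..<N}) {G. tr G \<in> A} = mu p ({..<N} \<times> {..<N}) A"
proof -
  let ?I = "{..<N} \<times> {..<N}"
  have bij: "bij_betw tr (Om ?I \<inter> {G. tr G \<in> A}) (Om ?I \<inter> A)"
    by (rule bij_betwI[where g = tr]) (auto simp: Om_def tr_def)
  have W: "Wt p ?I (tr G) = Wt p ?I G" for G
  proof -
    have "Wt p ?I (tr G) = (\<Prod>e\<in>prod.swap ` ?I. if G e then p else 1 - p)"
      unfolding Wt_def tr_def by (subst prod.reindex) auto
    also have "prod.swap ` ?I = ?I" by auto
    finally show ?thesis by (simp add: Wt_def)
  qed
  have "mu p ?I {G. tr G \<in> A} = (\<Sum>G\<in>Om ?I \<inter> {G. tr G \<in> A}. Wt p ?I (tr G))"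
    by (simp add: mu_def W)
  also have "\<dots> = mu p ?I A"
    unfolding mu_def by (rule sum.reindex_bij_betw[OF bij])
  finally show ?thesis .
qed

lemma mu_Ev_sym: "mu p ({..<N} \<times> {..<N}) (Ev N K C) = mu p ({..<N} \<times> {..<N}) (Ev N C K)"
proof -
  have "Ev N K C = {G. tr G \<in> Ev N C K}" using Ev_tr by auto
  thus ?thesis using mu_tr by simp
qed

lemma combine:
  fixes L q \<rho> f :: real and a b N :: nat
  assumes "q \<le> L" "0 \<le> q" "0 \<le> \<rho>" "\<rho> \<le> 1" "0 \<le> f" "b \<le> a" "a \<le> N"
    and I1: "2 * q \<le> L + q * \<rho> ^ N + 2 * q * f"
  shows "(real a + real b) * q * (1 - f) \<le> real a * L + real b * q * \<rho> ^ a"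
proof -
  have pa: "\<rho> ^ N \<le> \<rho> ^ a" using assms by (intro power_decreasing) auto
  show ?thesis
  proof (cases "0 \<le> \<rho> ^ a - 1 + f")
    case True
    have "0 \<le> real a * (L - q + q * f)" using assms by (intro mult_nonneg_nonneg) auto
    moreover have "0 \<le> real b * q * (\<rho> ^ a - 1 + f)" using True assms by (intro mult_nonneg_nonneg) auto
    ultimately show ?thesis by (simp add: algebra_simps)
  next
    case False
    have "real a * (q * (\<rho> ^ a - 1 + f)) \<le> real b * (q * (\<rho> ^ a - 1 + f))"
    proof -
      have "q * (\<rho> ^ a - 1 + f) \<le> 0" using False assms by (simp add: mult_nonneg_nonpos)
      moreover have "real b \<le> real a" using assms by simp
      ultimately show ?thesis using mult_right_mono_neg[of "real b" "real a" "q * (\<rho> ^ a - 1 + f)"] by simp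
    qed
    moreover have "0 \<le> real a * (L + q * \<rho> ^ a + 2 * q * f - 2 * q)"
    proof -
      have "q * \<rho> ^ N \<le> q * \<rho> ^ a" by (rule mult_left_mono) (use pa assms in auto)
      thus ?thesis using I1 by (intro mult_nonneg_nonneg) auto
    qed
    ultimately show ?thesis by (simp add: algebra_simps)
  qed
qed

lemma I1:
  fixes L q \<sigma> f R :: real
  assumes q: "0 < q" "q < 1" and s: "0 < \<sigma>" and R: "0 \<le> R" "1 - \<sigma> / (1 - q) \<le> R"
    and L: "q \<le> L" "2 * q^2 \<le> L"
    and f1: "1/2 \<le> \<sigma> \<Longrightarrow> 1/2 \<le> f" and f2: "\<sigma> < 1/2 \<Longrightarrow> \<sigma> \<le> f"
  shows "2 * q \<le> L + q * R + 2 * q * f"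
proof (cases "1/2 \<le> \<sigma>")
  case True
  have "q * 1 \<le> q * (2 * f)" by (rule mult_left_mono) (use f1[OF True] q in auto)
  moreover have "0 \<le> q * R" using q R by simp
  ultimately show ?thesis using L by (simp add: algebra_simps)
next
  case False
  have sf: "q * (2 * \<sigma>) \<le> q * (2 * f)" by (rule mult_left_mono) (use f2 False q in auto)
  define s' where "s' = \<sigma> / (1 - q)"
  have sig: "\<sigma> = s' * (1 - q)" using q by (simp add: s'_def)
  have s'0: "0 < s'" using s q by (simp add: s'_def)
  have R': "1 - s' \<le> R" using R by (simp add: s'_def)
  have qR: "q * (1 - s') \<le> q * R" by (rule mult_left_mono) (use R' q in auto)
  show ?thesis
  proof (cases "q \<le> 1/2")
    case True
    have "s' * (1/2) \<le> s' * (1 - q)" by (rule mult_left_mono) (use True s'0 in auto)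
    hence "s' \<le> 2 * \<sigma>" using sig by linarith
    hence "q * s' \<le> q * (2 * \<sigma>)" by (rule mult_left_mono) (use q in auto)
    thus ?thesis using sf L qR by (simp add: algebra_simps)
  next
    case q2: False
    show ?thesis
    proof (cases "1 - q \<le> \<sigma>")
      case True
      have "q * (2 * (1 - q)) \<le> q * (2 * \<sigma>)" by (rule mult_left_mono) (use True q in auto)
      moreover have "0 \<le> q * R" using q R by simp
      moreover have "q * (2 * (1 - q)) = 2 * q - 2 * q^2" by (simp add: algebra_simps power2_eq_square)
      ultimately show ?thesis using sf L by linarith
    next
      case False
      have "s' * (1 - q) < 1 * (1 - q)" using False sig by simp
      hence "s' < 1" using q by (simp only: mult_less_cancel_right)
      have e: "q * s' - q * (2 * \<sigma>) = (q * (2 * q - 1)) * s'" unfolding sig by (simp add: algebra_simps)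
      have "(q * (2 * q - 1)) * s' \<le> (q * (2 * q - 1)) * 1"
        by (rule mult_left_mono) (use \<open>s' < 1\<close> q q2 in auto)
      hence "q * s' - q * (2 * \<sigma>) \<le> 2 * q^2 - q" using e by (simp add: algebra_simps power2_eq_square)
      moreover have "q * (1 - s') = q - q * s'" by (simp add: algebra_simps)
      ultimately show ?thesis using sf L qR by linarith
    qed
  qed
qed

lemma ln_ge_2sq:
  fixes q :: real
  assumes "0 \<le> q" "q < 1"
  shows "2 * q^2 \<le> - ln (1 - q)"
proof -
  let ?g = "\<lambda>x::real. - ln (1 - x) - 2 * x^2"
  have "?g 0 \<le> ?g q"
  proof (rule deriv_nonneg_imp_mono[where g = ?g and g' = "\<lambda>x. 1 / (1 - x) - 4 * x" and a = 0 and b = q])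
    fix x assume x: "x \<in> {0..q}"
    hence x1: "x < 1" using assms by auto
    show "(?g has_real_derivative 1 / (1 - x) - 4 * x) (at x)"
      using x1 by (auto intro!: derivative_eq_intros simp: field_simps)
    have "4 * x * (1 - x) \<le> 1"
    proof -
      have "0 \<le> (2 * x - 1)^2" by simp
      thus ?thesis by (simp add: algebra_simps power2_eq_square)
    qed
    hence "4 * x \<le> 1 / (1 - x)" using x1 by (simp add: field_simps)
    thus "0 \<le> 1 / (1 - x) - 4 * x" by simp
  qed (use assms in auto)
  thus ?thesis by simp
qed

lemma ln_ge_half:
  fixes x :: real
  assumes "0 < x" "x \<le> 2"
  shows "x / 2 \<le> ln (1 + x)"
proof (cases "x \<le> 1")
  case True
  have "ln (1 / (1 + x)) \<le> 1 / (1 + x) - 1" using assms by (intro ln_le_minus_one) auto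
  hence "x / (1 + x) \<le> ln (1 + x)" using assms by (simp add: ln_div field_simps)
  moreover have "x / 2 \<le> x / (1 + x)" using assms True by (intro divide_left_mono) auto
  ultimately show ?thesis by linarith
next
  case False
  have "ln (3 / (1 + x)) \<le> 3 / (1 + x) - 1" using assms by (intro ln_le_minus_one) auto
  hence a: "ln 3 - (3 / (1 + x) - 1) \<le> ln (1 + x)" using assms by (simp add: ln_div)
  have b: "1 < ln (3::real)" by (rule ln3_gt_1)
  have c: "x / 2 \<le> 1 - (3 / (1 + x) - 1)"
  proof -
    have "0 \<le> (x - 1) * (2 - x)" using False assms by (intro mult_nonneg_nonneg) auto
    hence "x * (1 + x) \<le> 2 * (2 * (1 + x) - 3)" by (simp add: algebra_simps)
    thus ?thesis using assms by (simp add: field_simps)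
  qed
  show ?thesis using a b c by linarith
qed

lemma f_big:
  fixes s :: real
  assumes "1/2 \<le> s"
  shows "1/2 \<le> s * ln (1 + 1 / s)"
proof -
  have s0: "0 < s" using assms by simp
  have "(1 / s) / 2 \<le> ln (1 + 1 / s)" using assms s0 by (intro ln_ge_half) (auto simp: field_simps)
  hence "s * ((1 / s) / 2) \<le> s * ln (1 + 1 / s)" using s0 by (intro mult_left_mono) auto
  thus ?thesis using s0 by simp
qed

lemma f_small:
  fixes s :: real
  assumes "0 < s" "s < 1/2"
  shows "s \<le> s * ln (1 + 1 / s)"
proof -
  have "3 < 1 + 1 / s" using assms by (simp add: field_simps)
  hence "ln 3 < ln (1 + 1 / s)" by (intro ln_less_cancel_iff[THEN iffD2]) auto
  hence "1 \<le> ln (1 + 1 / s)" using ln3_gt_1 by linarith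
  thus ?thesis using assms by (simp add: mult_le_cancel_left1)
qed

lemma qq_rr:
  assumes "2 \<le> N"
  shows "qq N p = (1 - p) * rr N p + p * (1 - p) ^ (N - 1)"
proof -
  obtain k where N: "N = Suc (Suc k)" using assms by (metis add_2_eq_Suc le_Suc_ex)
  show ?thesis unfolding N qq_def rr_def by (simp add: algebra_simps)
qed

lemma qq_lt1:
  assumes "0 < p" "p \<le> 1" "2 \<le> N"
  shows "qq N p < 1"
proof -
  let ?M = "rowset N 0" and ?D = "{G. card {e \<in> rowset N 0. G e} \<le> 1}"
  have fM: "finite ?M" by simp
  have q: "mu p ?M ?D = qq N p"
    using mu_cnt1[of ?M p] by (simp only: card_rowset qq_def finite_rowset)
  let ?G = "\<lambda>e. e \<in> ?M"
  have G: "?G \<in> Om ?M \<inter> - ?D" using assms by (auto simp: Om_def card_rowset)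
  have "Wt p ?M ?G \<le> mu p ?M (- ?D)" unfolding mu_def
    by (rule member_le_sum[OF G]) (use assms in \<open>auto intro: Wt_nonneg simp: finite_Om\<close>)
  moreover have "Wt p ?M ?G = p ^ N" by (simp add: Wt_def card_rowset)
  moreover have "0 < p ^ N" using assms by simp
  ultimately show ?thesis using q mu_compl[OF fM, of p ?D] by simp
qed

lemma rho_bern:
  assumes "0 < p" "p < 1" "2 \<le> N"
  shows "1 - p * real N * rr N p / (1 - qq N p) \<le> rho N p ^ N"
proof -
  let ?r = "rr N p" and ?q = "qq N p"
  have N1: "1 \<le> N" using assms by simp
  have r: "0 \<le> ?r" "?r \<le> 1" using rr_bounds[of p N] assms by auto
  have q1: "?q < 1" using qq_lt1[of p N] assms by simp
  have qr: "(1 - p) * ?r \<le> ?q" using qq_rr[OF assms(3), of p] assms by simp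
  have den: "0 < 1 - (1 - p) * ?r" using qr q1 by linarith
  have one_minus: "1 - rho N p = p * ?r / (1 - (1 - p) * ?r)"
    using den by (simp add: rho_def field_simps)
  have rb: "0 \<le> rho N p" "rho N p \<le> 1" using rho_bounds[of p N] assms by auto
  have "1 + real N * (rho N p - 1) \<le> (1 + (rho N p - 1)) ^ N"
    by (rule Bernoulli_inequality) (use rb in simp)
  hence B: "1 - real N * (1 - rho N p) \<le> rho N p ^ N" by (simp add: algebra_simps)
  have "real N * (1 - rho N p) = p * real N * ?r / (1 - (1 - p) * ?r)" by (simp add: one_minus)
  also have "\<dots> \<le> p * real N * ?r / (1 - ?q)"
    using r assms qr q1 by (intro divide_left_mono) auto
  finally show ?thesis using B by linarith
qed

lemma analytic_final:
  assumes N: "2 \<le> N" and p: "0 < p" "p < 1" and ab: "b \<le> a" "a \<le> N"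
  shows "(1 - qq N p) ^ a * (1 - qq N p * rho N p ^ a) ^ b
    \<le> exp (- ((real a + real b) * qq N p) + ((real a + real b) * qq N p) * (p * real N * rr N p) * ln (1 + 1 / (p * real N * rr N p)))"
proof -
  define q where "q = qq N p"
  define r where "r = rr N p"
  define \<rho> where "\<rho> = rho N p"
  define \<sigma> where "\<sigma> = p * real N * r"
  define f where "f = \<sigma> * ln (1 + 1 / \<sigma>)"
  define L where "L = - ln (1 - q)"
  have N1: "1 \<le> N" using N by simp
  have q1: "q < 1" using qq_lt1[of p N] p N by (simp add: q_def)
  have q0: "0 < q"
  proof -
    have "0 < (1 - p) ^ N" using p by simp
    moreover have "0 \<le> real N * p * (1 - p) ^ (N - 1)" using p by simp
    ultimately show ?thesis by (simp add: q_def qq_def)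
  qed
  have r0: "0 < r"
  proof -
    have "0 < (1 - p) ^ (N - 1)" using p by simp
    moreover have "0 \<le> real (N - 1) * p * (1 - p) ^ (N - 1 - 1)" using p by simp
    ultimately show ?thesis by (simp add: r_def rr_def)
  qed
  have s0: "0 < \<sigma>" using p r0 N by (simp add: \<sigma>_def)
  have f0: "0 \<le> f" using s0 by (simp add: f_def)
  have rb: "0 \<le> \<rho>" "\<rho> \<le> 1" using rho_bounds[OF p(1) _ N1] p by (auto simp: \<rho>_def)
  have Lq: "q \<le> L"
  proof -
    have "ln (1 - q) \<le> (1 - q) - 1" using q1 by (intro ln_le_minus_one) auto
    thus ?thesis by (simp add: L_def)
  qed
  have L2: "2 * q^2 \<le> L" using ln_ge_2sq[of q] q0 q1 by (simp add: L_def)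
  have R: "1 - \<sigma> / (1 - q) \<le> \<rho> ^ N" using rho_bern[OF p N] by (simp add: \<sigma>_def r_def q_def \<rho>_def)
  have I: "2 * q \<le> L + q * \<rho> ^ N + 2 * q * f"
    by (rule I1[OF q0 q1 s0 _ R Lq L2]) (use rb f_big f_small s0 in \<open>auto simp: f_def\<close>)
  have C: "(real a + real b) * q * (1 - f) \<le> real a * L + real b * q * \<rho> ^ a"
    by (rule combine[OF Lq _ rb f0 ab I]) (use q0 in simp)
  have e1: "(1 - q) ^ a = exp (- (real a * L))"
  proof -
    have "exp (- (real a * L)) = exp (real a * ln (1 - q))" by (simp add: L_def)
    also have "\<dots> = exp (ln (1 - q)) ^ a" by (rule exp_of_nat_mult)
    also have "\<dots> = (1 - q) ^ a" using q1 by simp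
    finally show ?thesis by simp
  qed
  have e2: "(1 - q * \<rho> ^ a) ^ b \<le> exp (- (real b * (q * \<rho> ^ a)))"
  proof -
    have y1: "q * \<rho> ^ a \<le> 1 * 1" using q0 q1 rb by (intro mult_mono) (auto simp: power_le_one)
    have "(1 - q * \<rho> ^ a) ^ b \<le> exp (- (q * \<rho> ^ a)) ^ b"
      using y1 exp_ge_add_one_self[of "- (q * \<rho> ^ a)"] by (intro power_mono) auto
    also have "\<dots> = exp (real b * (- (q * \<rho> ^ a)))" by (rule exp_of_nat_mult[symmetric])
    finally show ?thesis by simp
  qed
  have "(1 - q) ^ a * (1 - q * \<rho> ^ a) ^ b \<le> exp (- (real a * L)) * exp (- (real b * (q * \<rho> ^ a)))"
    unfolding e1 by (rule mult_left_mono[OF e2]) simp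
  also have "\<dots> = exp (- (real a * L + real b * q * \<rho> ^ a))" by (simp add: exp_add[symmetric] algebra_simps)
  also have "\<dots> \<le> exp (- ((real a + real b) * q * (1 - f)))" using C by simp
  also have "- ((real a + real b) * q * (1 - f)) = - ((real a + real b) * q) + ((real a + real b) * q) * \<sigma> * ln (1 + 1 / \<sigma>)"
    by (simp add: f_def algebra_simps)
  finally show ?thesis by (simp add: q_def \<rho>_def \<sigma>_def r_def)
qed

lemma prob_eq_mu:
  assumes "0 \<le> p" "p \<le> 1"
  shows "measure_pmf.prob (G_NNp N p) A = mu p ({..<N} \<times> {..<N}) A"
proof -
  let ?I = "{..<N} \<times> {..<N}" and ?M = "G_NNp N p"
  have fI: "finite ?I" by simp
  have sp: "set_pmf ?M \<subseteq> Om ?I"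
    unfolding G_NNp_def using set_Pi_pmf_subset[OF fI, of False "\<lambda>_. bernoulli_pmf p"] by (auto simp: Om_def)
  have "measure_pmf.prob ?M A = measure_pmf.prob ?M (A \<inter> set_pmf ?M)" by (simp add: measure_Int_set_pmf)
  also have "A \<inter> set_pmf ?M = (A \<inter> Om ?I) \<inter> set_pmf ?M" using sp by auto
  also have "measure_pmf.prob ?M \<dots> = measure_pmf.prob ?M (A \<inter> Om ?I)" by (rule measure_Int_set_pmf)
  also have "\<dots> = sum (pmf ?M) (A \<inter> Om ?I)" by (rule measure_measure_pmf_finite) (simp add: finite_Om)
  also have "\<dots> = mu p ?I A" unfolding mu_def
  proof (subst Int_commute, intro sum.cong refl)
    fix G assume "G \<in> Om ?I \<inter> A"
    hence "\<forall>x. x \<notin> ?I \<longrightarrow> G x = False" by (auto simp: Om_def)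
    thus "pmf ?M G = Wt p ?I G" using assms
      by (simp add: G_NNp_def pmf_Pi[OF fI] Wt_def) (intro prod.cong refl, simp)
  qed
  finally show ?thesis .
qed

lemma rdeg_bip: "bip_degree N G (Inl i) = rdeg N G i"
proof -
  have "{e \<in> rowset N i. G e} = Pair i ` {j \<in> {..<N}. G (i, j)}" by (auto simp: rowset_def)
  thus ?thesis by (simp add: rdeg_def card_image inj_on_def)
qed

lemma cdeg_bip: "bip_degree N G (Inr j) = cdeg N G j"
proof -
  have "{e \<in> colset N j. G e} = (\<lambda>i. (i, j)) ` {i \<in> {..<N}. G (i, j)}" by (auto simp: colset_def)
  thus ?thesis by (simp add: cdeg_def card_image inj_on_def)
qed

lemma finite_bip: "finite (bip_vertices N)" by (simp add: bip_vertices_def)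

lemma card_bip: "card (bip_vertices N) = 2 * N"
proof -
  have "card (Inl ` {..<N} \<union> Inr ` {..<N} :: (nat + nat) set) = card (Inl ` {..<N} :: (nat + nat) set) + card (Inr ` {..<N} :: (nat + nat) set)"
    by (rule card_Un_disjoint) auto
  thus ?thesis by (simp add: bip_vertices_def card_image)
qed

theorem lemma5p6:
  fixes N t :: nat and p :: real and T :: "(nat + nat) set"
  assumes "N \<ge> 2" and "0 < p" and "p < 1"
    and "T \<subseteq> bip_vertices N" and "card T = t"
  defines "\<mu> \<equiv> (2 * real N - real t) * ((1 - p) ^ N + real N * p * (1 - p) ^ (N - 1))"
    and "\<sigma> \<equiv> p * real N * ((1 - p) ^ (N - 1) + (real N - 1) * p * (1 - p) ^ (N - 2))"
  shows "measure_pmf.prob (G_NNp N p) {G. low_deg_count N T G = 0}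
           \<le> exp (- \<mu> + \<mu> * \<sigma> * ln (1 + 1 / \<sigma>))"
proof -
  let ?I = "{..<N} \<times> {..<N}"
  define K where "K = {i. i < N \<and> Inl i \<notin> T}"
  define C where "C = {j. j < N \<and> Inr j \<notin> T}"
  have p0: "0 \<le> p" "p \<le> 1" using assms by auto
  have KN: "K \<subseteq> {..<N}" and CN: "C \<subseteq> {..<N}" by (auto simp: K_def C_def)
  have fK: "finite K" and fC: "finite C" using finite_subset[OF KN] finite_subset[OF CN] by auto
  have sub: "{G. low_deg_count N T G = 0} \<subseteq> Ev N K C"
  proof
    fix G assume "G \<in> {G. low_deg_count N T G = 0}"
    hence "card {v \<in> bip_vertices N - T. bip_degree N G v \<le> 1} = 0" by (simp add: low_deg_count_def)
    hence em: "{v \<in> bip_vertices N - T. bip_degree N G v \<le> 1} = {}" using finite_bip by simp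
    have "2 \<le> rdeg N G i" if "i \<in> K" for i
    proof -
      have "Inl i \<in> bip_vertices N - T" using that by (auto simp: K_def bip_vertices_def)
      hence "\<not> bip_degree N G (Inl i) \<le> 1" using em by blast
      thus ?thesis unfolding rdeg_bip[symmetric] by linarith
    qed
    moreover have "2 \<le> cdeg N G j" if "j \<in> C" for j
    proof -
      have "Inr j \<in> bip_vertices N - T" using that by (auto simp: C_def bip_vertices_def)
      hence "\<not> bip_degree N G (Inr j) \<le> 1" using em by blast
      thus ?thesis unfolding cdeg_bip[symmetric] by linarith
    qed
    ultimately show "G \<in> Ev N K C" by (simp add: Ev_def)
  qed
  have cardKC: "card K + card C = 2 * N - t"
  proof -
    have "bip_vertices N - T = Inl ` K \<union> Inr ` C" by (auto simp: bip_vertices_def K_def C_def)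
    hence "card (bip_vertices N - T) = card (Inl ` K \<union> Inr ` C)" by simp
    also have "\<dots> = card (Inl ` K :: (nat + nat) set) + card (Inr ` C :: (nat + nat) set)"
      using fK fC by (intro card_Un_disjoint) auto
    also have "\<dots> = card K + card C" by (simp add: card_image)
    finally have "card (bip_vertices N - T) = card K + card C" .
    moreover have "card (bip_vertices N - T) = 2 * N - t"
      using card_Diff_subset[OF finite_subset[OF assms(4) finite_bip] assms(4)] assms(5) card_bip by simp
    ultimately show ?thesis by simp
  qed
  have tle: "t \<le> 2 * N" using card_mono[OF finite_bip assms(4)] assms(5) card_bip by simp
  have muq: "\<mu> = (real (card K) + real (card C)) * qq N p"
  proof -
    have "real (card K) + real (card C) = 2 * real N - real t" using cardKC tle by linarith
    thus ?thesis by (simp add: \<mu>_def qq_def)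
  qed
  have sig: "\<sigma> = p * real N * rr N p"
  proof -
    have "N - 1 - 1 = N - 2" by simp
    moreover have "real (N - 1) = real N - 1" using assms(1) by simp
    ultimately show ?thesis by (simp add: \<sigma>_def rr_def)
  qed
  have "measure_pmf.prob (G_NNp N p) {G. low_deg_count N T G = 0} = mu p ?I {G. low_deg_count N T G = 0}"
    by (rule prob_eq_mu[OF p0])
  also have "\<dots> \<le> mu p ?I (Ev N K C)" by (rule mu_mono[OF _ p0 sub]) simp
  also have "\<dots> \<le> exp (- \<mu> + \<mu> * \<sigma> * ln (1 + 1 / \<sigma>))"
  proof (cases "card C \<le> card K")
    case True
    have "mu p ?I (Ev N K C) \<le> (1 - qq N p) ^ card K * (1 - qq N p * rho N p ^ card K) ^ card C"
      by (rule cols_bound[OF assms(2) p0(2) KN fC CN])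
    also have "\<dots> \<le> exp (- \<mu> + \<mu> * \<sigma> * ln (1 + 1 / \<sigma>))"
      using analytic_final[OF assms(1-3) True] card_mono[OF finite_lessThan KN] by (simp add: muq sig)
    finally show ?thesis .
  next
    case False
    have "mu p ?I (Ev N K C) = mu p ?I (Ev N C K)" by (rule mu_Ev_sym)
    also have "\<dots> \<le> (1 - qq N p) ^ card C * (1 - qq N p * rho N p ^ card C) ^ card K"
      by (rule cols_bound[OF assms(2) p0(2) CN fK KN])
    also have "\<dots> \<le> exp (- \<mu> + \<mu> * \<sigma> * ln (1 + 1 / \<sigma>))"
      using analytic_final[OF assms(1-3), of "card K" "card C"] False card_mono[OF finite_lessThan CN]
      by (simp add: muq sig add.commute)
    finally show ?thesis .
  qed
  finally show ?thesis .
qed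

end
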